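(* Let $f$ be a nonzero real polynomial in $x_1,\ldots,x_n$ all of whose coefficients in the scaled monomial basis lie in $\{0,1\}$, and let $\mathcal{M}$ be the set of monomials occurring in $f$ (those with coefficient $1$). Then for every integer $k\ge 0$, $$\dim \partial^{=k} f \geq \frac{\sum_{P \in \mathcal{M}} \binom{\sup(P)}{k}}{|\mathcal{M}|^2},$$ where $\sup(P)$ denotes the number of distinct variables occurring in the monomial $P$.
   Context: For $\alpha\in\mathbb{N}^n$ the scaled monomial is $x^\alpha = x_1^{\alpha_1}\cdots x_n^{\alpha_n}/(\alpha_1!\cdots\alpha_n!)$; these form a basis of $\mathbb{R}[x_1,\ldots,x_n]$ (the scaled monomial basis), and coefficients of $f$ are taken with respect to this basis, i.e. $f=\sum_\alpha a_\alpha x^\alpha$. For $\beta\in\mathbb{N}^n$, $\partial_\beta f$ is the partial derivative differentiating $\beta_i$ times with respect to $x_i$; $\partial^{=k} f$ is the real linear span of all $\partial_\beta f$ with $\beta_1+\cdots+\beta_n=k$. *)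

theory Defs
  imports Complex_Main "HOL-Library.Poly_Mapping"
begin

text \<open>A real polynomial is given by its finitely supported
  coefficient map with respect to the scaled monomial basis x^alpha = prod x_i^(alpha_i)/alpha_i!,
  i.e. f = sum_alpha (Poly_Mapping.lookup f alpha) x^alpha.\<close>

type_synonym monom = "nat \<Rightarrow>\<^sub>0 nat"
type_synonym mpoly = "monom \<Rightarrow>\<^sub>0 real"

definition mp_scale :: "real \<Rightarrow> mpoly \<Rightarrow> mpoly" where
  "mp_scale c f = Poly_Mapping.map (\<lambda>a. c * a) f"

text \<open>In the scaled basis,
  d/dx_i x^alpha = x^(alpha - e_i) if alpha_i \<ge> 1 and 0 otherwise, so the coefficient of
  x^gamma in d/dx_i f is the coefficient of x^(gamma + e_i) in f.\<close>
definition pd :: "nat \<Rightarrow> mpoly \<Rightarrow> mpoly" where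
  "pd i f = Abs_poly_mapping (\<lambda>\<gamma>. Poly_Mapping.lookup f (\<gamma> + Poly_Mapping.single i 1))"

definition pderivs :: "monom \<Rightarrow> mpoly \<Rightarrow> mpoly" where
  "pderivs \<beta> f = foldr (\<lambda>i g. (pd i ^^ Poly_Mapping.lookup \<beta> i) g) (sorted_list_of_set (Poly_Mapping.keys \<beta>)) f"

definition pderivs_eq :: "nat \<Rightarrow> nat \<Rightarrow> mpoly \<Rightarrow> mpoly set" where
  "pderivs_eq n k f = module.span mp_scale
     {pderivs \<beta> f | \<beta>. Poly_Mapping.keys \<beta> \<subseteq> {..<n} \<and> (\<Sum>i<n. Poly_Mapping.lookup \<beta> i) = k}"

definition mp_dim :: "mpoly set \<Rightarrow> nat" where
  "mp_dim V = vector_space.dim mp_scale V"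

end

theory Submission imports Defs "HOL-Library.FuncSet" begin

lemma lookup_scale[simp]: "Poly_Mapping.lookup (mp_scale c f) g = c * Poly_Mapping.lookup f g"
  by (simp add: mp_scale_def map.rep_eq when_def)

lemma vs: "vector_space mp_scale"
  by unfold_locales (auto intro!: poly_mapping_eqI simp: lookup_add algebra_simps)

lemma lookup_pd[simp]: "Poly_Mapping.lookup (pd i f) g = Poly_Mapping.lookup f (g + Poly_Mapping.single i 1)"
proof -
  have "finite {g. Poly_Mapping.lookup f (g + Poly_Mapping.single i 1) \<noteq> 0}"
  proof -
    have "{g. Poly_Mapping.lookup f (g + Poly_Mapping.single i 1) \<noteq> 0} = (\<lambda>g. g + Poly_Mapping.single i 1) -` Poly_Mapping.keys f"
      by (auto simp: in_keys_iff)
    moreover have "finite ((\<lambda>g. g + Poly_Mapping.single i (1::nat)) -` Poly_Mapping.keys f)"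
      by (rule finite_vimageI) (auto simp: inj_def)
    ultimately show ?thesis by simp
  qed
  then show ?thesis by (simp add: pd_def)
qed

lemma lookup_pd_pow: "Poly_Mapping.lookup ((pd i ^^ m) f) g = Poly_Mapping.lookup f (g + Poly_Mapping.single i m)"
proof (induction m arbitrary: g)
  case 0 then show ?case by simp
next
  case (Suc m)
  have "Poly_Mapping.single i (Suc m) = Poly_Mapping.single i 1 + Poly_Mapping.single i m"
    by (simp add: single_add[symmetric])
  then show ?case using Suc by (simp add: add.assoc)
qed

lemma lookup_foldr: "Poly_Mapping.lookup (foldr (\<lambda>i g. (pd i ^^ Poly_Mapping.lookup \<beta> i) g) l f) g
   = Poly_Mapping.lookup f (g + (\<Sum>i\<leftarrow>l. Poly_Mapping.single i (Poly_Mapping.lookup \<beta> i)))"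
  by (induction l arbitrary: g) (simp_all add: lookup_pd_pow add_ac)

lemma lookup_pderivs: "Poly_Mapping.lookup (pderivs \<beta> f) g = Poly_Mapping.lookup f (g + \<beta>)"
proof -
  have "(\<Sum>i\<leftarrow>sorted_list_of_set (Poly_Mapping.keys \<beta>). Poly_Mapping.single i (Poly_Mapping.lookup \<beta> i))
     = (\<Sum>i\<in>Poly_Mapping.keys \<beta>. Poly_Mapping.single i (Poly_Mapping.lookup \<beta> i))"
    by (simp add: sum_list_distinct_conv_sum_set)
  also have "\<dots> = \<beta>"
    by (rule poly_mapping_eqI) (simp add: lookup_sum lookup_single when_def in_keys_iff)
  finally show ?thesis by (simp add: pderivs_def lookup_foldr)
qed

interpretation V: vector_space mp_scale by (rule vs)

lemma lead_sum_zero: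
  assumes fin: "finite T" and nz: "\<forall>w\<in>T. w \<noteq> 0" and inj: "inj_on (\<lambda>w. Max (Poly_Mapping.keys w)) T"
   and eq: "(\<Sum>w\<in>T. mp_scale (c w) w) = 0"
  shows "\<forall>w\<in>T. c w = 0"
  proof (rule ccontr)
    assume "\<not> (\<forall>w\<in>T. c w = 0)"
    define T' where "T' = {w\<in>T. c w \<noteq> 0}"
    have T'ne: "T' \<noteq> {}" and finT': "finite T'" using \<open>\<not> _\<close> fin by (auto simp: T'_def)
    define ld where "ld w = Max (Poly_Mapping.keys w)" for w :: mpoly
    define g0 where "g0 = Max (ld ` T')"
    have "g0 \<in> ld ` T'" unfolding g0_def using T'ne finT' by (intro Max_in) auto
    then obtain w0 where w0: "w0 \<in> T'" "ld w0 = g0" by auto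
    have kne: "Poly_Mapping.keys w \<noteq> {}" if "w \<in> T" for w using nz that by auto
    have w0k: "g0 \<in> Poly_Mapping.keys w0" using w0 kne[of w0] unfolding ld_def T'_def
      by (metis (mono_tags, lifting) Max_in finite_keys mem_Collect_eq)
    have zero: "c w * Poly_Mapping.lookup w g0 = 0" if "w \<in> T" "w \<noteq> w0" for w
    proof (cases "c w = 0")
      case False
      then have "w \<in> T'" using that by (simp add: T'_def)
      then have le: "ld w \<le> g0" unfolding g0_def using finT' by (intro Max_ge) auto
      have "ld w \<noteq> g0" using inj that w0 unfolding ld_def T'_def inj_on_def by auto
      then have lt: "ld w < g0" using le by simp
      have "g0 \<notin> Poly_Mapping.keys w"
      proof
        assume "g0 \<in> Poly_Mapping.keys w"
        then have "g0 \<le> ld w" unfolding ld_def by (intro Max_ge) auto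
        with lt show False by simp
      qed
      then show ?thesis by (simp add: in_keys_iff)
    qed simp
    have "0 = Poly_Mapping.lookup (\<Sum>w\<in>T. mp_scale (c w) w) g0" using eq by simp
    also have "\<dots> = (\<Sum>w\<in>T. c w * Poly_Mapping.lookup w g0)" by (simp add: lookup_sum)
    also have "\<dots> = c w0 * Poly_Mapping.lookup w0 g0"
    proof -
      have "w0 \<in> T" using w0 by (simp add: T'_def)
      then have "(\<Sum>w\<in>T. c w * Poly_Mapping.lookup w g0) = c w0 * Poly_Mapping.lookup w0 g0 + (\<Sum>w\<in>T - {w0}. c w * Poly_Mapping.lookup w g0)"
        using fin by (simp add: sum.remove)
      also have "(\<Sum>w\<in>T - {w0}. c w * Poly_Mapping.lookup w g0) = 0"
        using zero by (intro sum.neutral) auto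
      finally show ?thesis by simp
    qed
    also have "\<dots> \<noteq> 0" using w0 w0k by (simp add: T'_def in_keys_iff)
    finally show False by simp
  qed

lemma indep_lead:
  assumes nz: "\<forall>w\<in>T. w \<noteq> 0" and inj: "inj_on (\<lambda>w. Max (Poly_Mapping.keys w)) T"
  shows "V.independent T"
  unfolding V.dependent_explicit
proof clarify
  fix t u v assume "finite t" "t \<subseteq> T" "(\<Sum>v\<in>t. mp_scale (u v) v) = 0" "v \<in> t" "u v \<noteq> 0"
  moreover have "\<forall>w\<in>t. u w = 0"
    using calculation nz inj_on_subset[OF inj] by (intro lead_sum_zero) auto
  ultimately show False by auto
qed

definition ind :: "nat set \<Rightarrow> monom" where "ind S = (\<Sum>i\<in>S. Poly_Mapping.single i 1)"

lemma lookup_ind: "finite S \<Longrightarrow> Poly_Mapping.lookup (ind S) i = (if i \<in> S then 1 else 0)"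
  by (simp add: ind_def lookup_sum lookup_single when_def)

lemma keys_ind: "finite S \<Longrightarrow> Poly_Mapping.keys (ind S) = S"
  by (auto simp: in_keys_iff lookup_ind split: if_splits)

lemma finite_betas: "finite {\<beta>::monom. Poly_Mapping.keys \<beta> \<subseteq> {..<n} \<and> (\<Sum>i<n. Poly_Mapping.lookup \<beta> i) = k}"
proof -
  let ?A = "{\<beta>::monom. Poly_Mapping.keys \<beta> \<subseteq> {..<n} \<and> (\<Sum>i<n. Poly_Mapping.lookup \<beta> i) = k}"
  have "Poly_Mapping.lookup ` ?A \<subseteq> (\<lambda>h i. if i < n then h i else 0) ` PiE {..<n} (\<lambda>_. {..k})"
  proof
    fix g assume "g \<in> Poly_Mapping.lookup ` ?A"
    then obtain \<beta> where b: "\<beta> \<in> ?A" "g = Poly_Mapping.lookup \<beta>" by auto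
    have le: "Poly_Mapping.lookup \<beta> i \<le> k" if "i < n" for i
      using b(1) that member_le_sum[of i "{..<n}" "Poly_Mapping.lookup \<beta>"] by auto
    have "g = (\<lambda>i. if i < n then restrict g {..<n} i else 0)"
      using b by (auto simp: fun_eq_iff in_keys_iff)
    moreover have "restrict g {..<n} \<in> PiE {..<n} (\<lambda>_. {..k})" using le b by auto
    ultimately show "g \<in> (\<lambda>h i. if i < n then h i else 0) ` PiE {..<n} (\<lambda>_. {..k})" by blast
  qed
  moreover have "finite ((PiE {..<n} (\<lambda>_::nat. {..k::nat}) :: (nat \<Rightarrow> nat) set))" by (intro finite_PiE) auto
  ultimately have "finite (Poly_Mapping.lookup ` ?A)" by (meson finite_imageI finite_subset)
  moreover have "inj_on Poly_Mapping.lookup ?A" by (rule inj_onI) (simp add: poly_mapping_eqI)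
  ultimately show ?thesis using finite_imageD by blast
qed

theorem theorem2:
  fixes n k :: nat and f :: mpoly
  assumes "f \<noteq> 0"
    and "\<forall>\<alpha>\<in>Poly_Mapping.keys f. Poly_Mapping.keys \<alpha> \<subseteq> {..<n}"
    and "\<forall>\<alpha>. Poly_Mapping.lookup f \<alpha> \<in> {0, 1}"
  shows "real (mp_dim (pderivs_eq n k f)) \<ge>
           (\<Sum>P\<in>Poly_Mapping.keys f. real (card (Poly_Mapping.keys P) choose k)) / real (card (Poly_Mapping.keys f)) ^ 2"
proof -
  define M where "M = Poly_Mapping.keys f"
  have finM: "finite M" by (simp add: M_def)
  have Mne: "M \<noteq> {}" using assms(1) by (simp add: M_def)
  define Gen where "Gen = {pderivs \<beta> f | \<beta>. Poly_Mapping.keys \<beta> \<subseteq> {..<n} \<and> (\<Sum>i<n. Poly_Mapping.lookup \<beta> i) = k}"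
  have finGen: "finite Gen"
  proof -
    have "Gen = (\<lambda>\<beta>. pderivs \<beta> f) ` {\<beta>::monom. Poly_Mapping.keys \<beta> \<subseteq> {..<n} \<and> (\<Sum>i<n. Poly_Mapping.lookup \<beta> i) = k}"
      by (auto simp: Gen_def)
    then show ?thesis using finite_betas by simp
  qed
  define B where "B = {S. \<exists>\<alpha>\<in>M. S \<subseteq> Poly_Mapping.keys \<alpha> \<and> card S = k}"
  have finB: "finite B"
  proof -
    have "B \<subseteq> Pow (\<Union>\<alpha>\<in>M. Poly_Mapping.keys \<alpha>)" by (auto simp: B_def)
    then show ?thesis using finM by (meson finite_Pow_iff finite_UN_I finite_keys finite_subset)
  qed
  have finS: "finite S" if "S \<in> B" for S
    using that by (auto simp: B_def intro: finite_subset)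
  define v where "v S = pderivs (ind S) f" for S
  have vGen: "v S \<in> Gen" if SB: "S \<in> B" for S
  proof -
    obtain \<alpha> where a: "\<alpha> \<in> M" "S \<subseteq> Poly_Mapping.keys \<alpha>" "card S = k" using SB by (auto simp: B_def)
    have Sn: "S \<subseteq> {..<n}" using a assms(2) by (auto simp: M_def)
    have "(\<Sum>i<n. Poly_Mapping.lookup (ind S) i) = (\<Sum>i<n. if i \<in> S then 1 else 0)"
      using finS[OF that] by (simp add: lookup_ind)
    also have "\<dots> = card ({..<n} \<inter> S)" by (simp add: sum.If_cases)
    also have "\<dots> = k" using Sn a by (simp add: Int_absorb1)
    finally have "(\<Sum>i<n. Poly_Mapping.lookup (ind S) i) = k" .
    then show ?thesis using Sn finS[OF that] unfolding Gen_def v_def by (intro CollectI exI[of _ "ind S"]) (simp add: keys_ind)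
  qed
  have lv: "Poly_Mapping.lookup (v S) g = Poly_Mapping.lookup f (g + ind S)" for S g
    by (simp add: v_def lookup_pderivs)
  have vnz: "v S \<noteq> 0" if SB: "S \<in> B" for S
  proof -
    obtain \<alpha> where a: "\<alpha> \<in> M" "S \<subseteq> Poly_Mapping.keys \<alpha>" using SB by (auto simp: B_def)
    have "\<alpha> - ind S + ind S = \<alpha>"
      using a finS[OF that] by (intro poly_mapping_eqI) (auto simp: lookup_add lookup_minus lookup_ind in_keys_iff)
    then have "Poly_Mapping.lookup (v S) (\<alpha> - ind S) \<noteq> 0" using a by (simp add: lv M_def in_keys_iff)
    then show ?thesis by auto
  qed
  define ld where "ld S = Max (Poly_Mapping.keys (v S))" for S
  have ldM: "ld S + ind S \<in> M" if "S \<in> B" for S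
  proof -
    have "ld S \<in> Poly_Mapping.keys (v S)" unfolding ld_def using vnz[OF that] by (intro Max_in) auto
    then show ?thesis by (simp add: in_keys_iff lv M_def)
  qed
  define L where "L = ld ` B"
  have finL: "finite L" using finB by (simp add: L_def)
  have fib: "card {S\<in>B. ld S = g} \<le> card M" for g
  proof -
    have "inj_on (\<lambda>S. g + ind S) {S\<in>B. ld S = g}"
    proof (rule inj_onI)
      fix S S' assume "S \<in> {S\<in>B. ld S = g}" "S' \<in> {S\<in>B. ld S = g}" "g + ind S = g + ind S'"
      then show "S = S'" using finS keys_ind by (metis (no_types, lifting) add_left_cancel mem_Collect_eq)
    qed
    moreover have "(\<lambda>S. g + ind S) ` {S\<in>B. ld S = g} \<subseteq> M" using ldM by auto
    ultimately show ?thesis using finM by (metis card_inj_on_le)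
  qed
  have cardB: "card B \<le> card L * card M"
  proof -
    have "B = (\<Union>g\<in>L. {S\<in>B. ld S = g})" by (auto simp: L_def)
    then have "card B \<le> (\<Sum>g\<in>L. card {S\<in>B. ld S = g})" using finL by (metis card_UN_le)
    also have "\<dots> \<le> (\<Sum>g\<in>L. card M)" by (intro sum_mono fib)
    finally show ?thesis by simp
  qed
  define N where "N = (\<Sum>P\<in>M. card (Poly_Mapping.keys P) choose k)"
  have cardN: "N \<le> card M * card B"
  proof -
    have "N = (\<Sum>P\<in>M. card {S. S \<subseteq> Poly_Mapping.keys P \<and> card S = k})"
      by (simp add: N_def n_subsets)
    also have "\<dots> \<le> (\<Sum>P\<in>M. card B)"
      using finB by (intro sum_mono card_mono) (auto simp: B_def)
    finally show ?thesis by simp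
  qed
  define sel where "sel g = (SOME S. S \<in> B \<and> ld S = g)" for g
  have sel: "sel g \<in> B \<and> ld (sel g) = g" if gL: "g \<in> L" for g
  proof -
    have "\<exists>S. S \<in> B \<and> ld S = g" using gL unfolding L_def by blast
    then show ?thesis unfolding sel_def by (rule someI_ex)
  qed
  define T where "T = v ` sel ` L"
  have injT: "inj_on (\<lambda>w. Max (Poly_Mapping.keys w)) T"
  proof (rule inj_onI)
    fix w1 w2 assume w: "w1 \<in> T" "w2 \<in> T" "Max (Poly_Mapping.keys w1) = Max (Poly_Mapping.keys w2)"
    obtain g1 where g1: "g1 \<in> L" "w1 = v (sel g1)" using w(1) unfolding T_def by blast
    obtain g2 where g2: "g2 \<in> L" "w2 = v (sel g2)" using w(2) unfolding T_def by blast
    have "ld (sel g1) = ld (sel g2)" using w(3) g1 g2 unfolding ld_def by simp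
    then have "g1 = g2" using sel g1 g2 by simp
    then show "w1 = w2" using g1 g2 by simp
  qed
  have cardT: "card T = card L"
  proof -
    have "inj_on (v \<circ> sel) L"
    proof (rule inj_onI)
      fix g1 g2 assume g: "g1 \<in> L" "g2 \<in> L" "(v \<circ> sel) g1 = (v \<circ> sel) g2"
      then have "ld (sel g1) = ld (sel g2)" unfolding ld_def by simp
      then show "g1 = g2" using sel g by simp
    qed
    then show ?thesis unfolding T_def image_comp by (rule card_image)
  qed
  have indT: "V.independent T"
  proof (rule indep_lead[OF _ injT])
    show "\<forall>w\<in>T. w \<noteq> 0"
    proof
      fix w assume "w \<in> T"
      then obtain g where g: "g \<in> L" "w = v (sel g)" unfolding T_def by blast
      show "w \<noteq> 0" using vnz[of "sel g"] sel[OF g(1)] g(2) by simp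
    qed
  qed
  have TG: "T \<subseteq> Gen"
  proof
    fix w assume "w \<in> T"
    then obtain g where g: "g \<in> L" "w = v (sel g)" unfolding T_def by blast
    show "w \<in> Gen" using vGen[of "sel g"] sel[OF g(1)] g(2) by simp
  qed
  obtain Bs where Bs: "Bs \<subseteq> Gen" "V.independent Bs" "Gen \<subseteq> V.span Bs"
    using V.maximal_independent_subset by blast
  have dimeq: "card Bs = V.dim Gen" using V.basis_card_eq_dim[OF Bs(1) Bs(3) Bs(2)] .
  have "card T \<le> card Bs"
  proof -
    have "finite Bs" using finGen Bs(1) by (rule finite_subset[rotated])
    moreover have "T \<subseteq> V.span Bs" using TG Bs(3) by (rule order_trans)
    ultimately show ?thesis using V.independent_span_bound[of Bs T] indT by simp
  qed
  then have Ldim: "card L \<le> mp_dim (pderivs_eq n k f)"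
    using dimeq cardT by (simp add: mp_dim_def pderivs_eq_def Gen_def[symmetric])
  have "real N \<le> real (card M) ^ 2 * real (mp_dim (pderivs_eq n k f))"
  proof -
    have "N \<le> card M * (card L * card M)" using cardN cardB by (meson le_trans mult_le_mono2)
    also have "\<dots> \<le> card M ^ 2 * mp_dim (pderivs_eq n k f)" using Ldim by (simp add: power2_eq_square)
    finally show ?thesis by (metis of_nat_le_iff of_nat_mult of_nat_power)
  qed
  moreover have "card M > 0" using finM Mne by (simp add: card_gt_0_iff)
  ultimately have "real N / real (card M) ^ 2 \<le> real (mp_dim (pderivs_eq n k f))"
    by (subst pos_divide_le_eq) (simp_all add: mult.commute)
  moreover have "(\<Sum>P\<in>Poly_Mapping.keys f. real (card (Poly_Mapping.keys P) choose k)) = real N"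
    unfolding N_def M_def by (rule of_nat_sum[symmetric])
  ultimately show ?thesis unfolding M_def by simp
qed

end
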